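(* Let $\varepsilon>0$ and let $f:\{0,1\}^n\to\{0,1\}$ be a symmetric function with $\mathrm{bias}(f)\ge\varepsilon$. Draw $x_1,\dots,x_n$ independently and uniformly from $\{0,1\}$, and let $\tau^{(0)}$ be the smallest $t$ such that the restriction of $f$ obtained by fixing the first $t$ variables to $x_1,\dots,x_t$ is a constant function. Then $\mathbb{E}[\tau^{(0)}]\ge\Omega\!\left(\frac{n}{\log(1/\varepsilon)}\right)$, with an absolute implied constant.
   Context: $f$ is symmetric if $f(x)=f(y)$ whenever $x,y$ have the same number of ones. $\mathrm{bias}(f)=\min\{\Pr_{x}[f(x)\ne0],\Pr_x[f(x)\ne1]\}$ for uniform $x\in\{0,1\}^n$. *)

theory Defs
  imports Complex_Main
begin

text \<open>Points of {0,1}^n are boolean lists of length n (False = 0, True = 1);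
  a Boolean function f : {0,1}^n -> {0,1} is a map bool list => bool, considered on cube n.\<close>

definition cube :: "nat \<Rightarrow> bool list set" where
  "cube n = {xs. length xs = n}"

definition symmetric_fun :: "nat \<Rightarrow> (bool list \<Rightarrow> bool) \<Rightarrow> bool" where
  "symmetric_fun n f \<longleftrightarrow>
     (\<forall>x\<in>cube n. \<forall>y\<in>cube n. count_list x True = count_list y True \<longrightarrow> f x = f y)"

definition prob_cube :: "nat \<Rightarrow> (bool list \<Rightarrow> bool) \<Rightarrow> real" where
  "prob_cube n P = real (card {x\<in>cube n. P x}) / 2 ^ n"

definition bias :: "nat \<Rightarrow> (bool list \<Rightarrow> bool) \<Rightarrow> real" where
  "bias n f = min (prob_cube n (\<lambda>x. f x \<noteq> False)) (prob_cube n (\<lambda>x. f x \<noteq> True))"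

definition restriction_constant :: "nat \<Rightarrow> (bool list \<Rightarrow> bool) \<Rightarrow> bool list \<Rightarrow> nat \<Rightarrow> bool" where
  "restriction_constant n f x t \<longleftrightarrow>
     (\<forall>y\<in>cube (n - t). \<forall>z\<in>cube (n - t). f (take t x @ y) = f (take t x @ z))"

definition tau0 :: "nat \<Rightarrow> (bool list \<Rightarrow> bool) \<Rightarrow> bool list \<Rightarrow> nat" where
  "tau0 n f x = (LEAST t. restriction_constant n f x t)"

definition expected_tau0 :: "nat \<Rightarrow> (bool list \<Rightarrow> bool) \<Rightarrow> real" where
  "expected_tau0 n f = (\<Sum>x\<in>cube n. real (tau0 n f x)) / 2 ^ n"

end

theory Submission
  imports Defs
begin

lemma cube_Suc: "cube (Suc n) = (\<lambda>x. True # x) ` cube n \<union> (\<lambda>x. False # x) ` cube n"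
proof
  show "cube (Suc n) \<subseteq> (\<lambda>x. True # x) ` cube n \<union> (\<lambda>x. False # x) ` cube n"
  proof
    fix x assume "x \<in> cube (Suc n)"
    then obtain a y where "x = a # y" "length y = n" unfolding cube_def by (cases x) auto
    then show "x \<in> (\<lambda>x. True # x) ` cube n \<union> (\<lambda>x. False # x) ` cube n"
      unfolding cube_def by (cases a) auto
  qed
qed (auto simp: cube_def)

lemma finite_cube: "finite (cube n)"
  by (induction n) (auto simp: cube_Suc, simp add: cube_def)

lemma sum_pow_count: "(\<Sum>x\<in>cube n. (r::real) ^ count_list x b) = (1 + r) ^ n"
proof (induction n)
  case 0
  have "cube 0 = {[]}" by (auto simp: cube_def)
  then show ?case by simp
next
  case (Suc n)
  have d: "(\<lambda>x. True # x) ` cube n \<inter> (\<lambda>x. False # x) ` cube n = {}" by auto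
  have "(\<Sum>x\<in>cube (Suc n). r ^ count_list x b)
      = (\<Sum>x\<in>(\<lambda>x. True # x) ` cube n. r ^ count_list x b) + (\<Sum>x\<in>(\<lambda>x. False # x) ` cube n. r ^ count_list x b)"
    unfolding cube_Suc by (rule sum.union_disjoint) (auto simp: finite_cube)
  also have "\<dots> = (\<Sum>x\<in>cube n. r ^ count_list (True # x) b) + (\<Sum>x\<in>cube n. r ^ count_list (False # x) b)"
    by (simp add: sum.reindex inj_on_def)
  also have "\<dots> = (1 + r) * (\<Sum>x\<in>cube n. r ^ count_list x b)"
    by (cases b) (auto simp: sum_distrib_left algebra_simps sum.distrib)
  finally show ?case using Suc by simp
qed

lemma card_cube: "real (card (cube n)) = 2 ^ n"
  using sum_pow_count[where n=n and r=1 and b=True] by simp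

lemma card_count_lt: "real (card {x\<in>cube n. count_list x b < d}) \<le> 2 ^ d * (3/2) ^ n"
proof -
  let ?S = "{x\<in>cube n. count_list x b < d}"
  have "real (card ?S) = (\<Sum>x\<in>?S. (1::real))" by simp
  also have "\<dots> \<le> (\<Sum>x\<in>?S. 2 ^ d * (1/2) ^ count_list x b)"
  proof (rule sum_mono)
    fix x assume "x \<in> ?S"
    then have "count_list x b \<le> d" by auto
    then have "(2::real) ^ d = 2 ^ (d - count_list x b) * 2 ^ count_list x b"
      by (simp add: power_add[symmetric])
    then have "(2::real) ^ d * (1/2) ^ count_list x b = 2 ^ (d - count_list x b)"
      by (simp add: power_one_over)
    then show "1 \<le> (2::real) ^ d * (1/2) ^ count_list x b" by simp
  qed
  also have "\<dots> \<le> (\<Sum>x\<in>cube n. 2 ^ d * (1/2) ^ count_list x b)"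
    by (rule sum_mono2) (auto simp: finite_cube)
  also have "\<dots> = 2 ^ d * (3/2) ^ n"
    using sum_pow_count[where n=n and r="1/2" and b=b] by (simp add: sum_distrib_left[symmetric])
  finally show ?thesis .
qed

lemma count_TF: "count_list xs True + count_list xs False = length xs"
  by (induction xs) auto

lemma count_repT[simp]: "count_list (replicate j True) True = j"
  by (induction j) auto

lemma count_repF[simp]: "count_list (replicate j False) True = 0"
  by (induction j) auto

lemma count_rep: "count_list (replicate j True @ replicate m False) True = j"
proof -
  have "count_list (replicate j True) True = j" by (induction j) auto
  moreover have "count_list (replicate m False) True = 0" by (induction m) auto
  ultimately show ?thesis by simp
qed

definition gg :: "nat \<Rightarrow> (bool list \<Rightarrow> bool) \<Rightarrow> nat \<Rightarrow> bool" where
  "gg n f j = f (replicate j True @ replicate (n - j) False)"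

lemma sym_g:
  assumes "symmetric_fun n f" "x \<in> cube n"
  shows "f x = gg n f (count_list x True)"
proof -
  have le: "count_list x True \<le> n" using assms(2) count_le_length[of x True] by (auto simp: cube_def)
  let ?y = "replicate (count_list x True) True @ replicate (n - count_list x True) False"
  have "?y \<in> cube n" using le by (auto simp: cube_def)
  moreover have "count_list ?y True = count_list x True" by (rule count_rep)
  ultimately show ?thesis using assms unfolding symmetric_fun_def gg_def by metis
qed

lemma rc_fail:
  assumes "symmetric_fun n f" "x \<in> cube n" "gg n f k \<noteq> gg n f (k+1)"
    "t \<le> k" "t + k + 1 \<le> n"
  shows "\<not> restriction_constant n f x t"
proof
  assume rc: "restriction_constant n f x t"
  define w where "w = count_list (take t x) True"
  have lt: "length (take t x) = t" using assms(2,4,5) by (auto simp: cube_def)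
  have wt: "w \<le> t" unfolding w_def using count_le_length[of "take t x" True] lt by simp
  define y where "y = replicate (k - w) True @ replicate (n - t - (k - w)) False"
  define z where "z = replicate (k + 1 - w) True @ replicate (n - t - (k + 1 - w)) False"
  have y: "y \<in> cube (n - t)" using wt assms(4,5) by (auto simp: y_def cube_def)
  have z: "z \<in> cube (n - t)" using wt assms(4,5) by (auto simp: z_def cube_def)
  have yc: "take t x @ y \<in> cube n" using y lt assms(5) by (auto simp: cube_def)
  have zc: "take t x @ z \<in> cube n" using z lt assms(5) by (auto simp: cube_def)
  have "count_list (take t x @ y) True = k" using wt assms(4) by (simp add: w_def[symmetric] y_def count_rep)
  moreover have "count_list (take t x @ z) True = k + 1" using wt assms(4) by (simp add: w_def[symmetric] z_def count_rep)
  moreover have "f (take t x @ y) = f (take t x @ z)" using rc y z unfolding restriction_constant_def by blast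
  ultimately show False using sym_g[OF assms(1) yc] sym_g[OF assms(1) zc] assms(3) by simp
qed

lemma rc_n: "x \<in> cube n \<Longrightarrow> restriction_constant n f x n"
  by (auto simp: restriction_constant_def cube_def)

lemma tau_ge:
  assumes "x \<in> cube n" "\<forall>t\<le>d. \<not> restriction_constant n f x t"
  shows "d < tau0 n f x"
proof -
  have "restriction_constant n f x (tau0 n f x)"
    unfolding tau0_def by (rule LeastI[of _ n]) (rule rc_n[OF assms(1)])
  then show ?thesis using assms(2) by (meson not_le)
qed

lemma exp_ge:
  assumes "\<forall>x\<in>cube n. D \<le> tau0 n f x"
  shows "real D \<le> expected_tau0 n f"
proof -
  have "(\<Sum>x\<in>cube n. real D) \<le> (\<Sum>x\<in>cube n. real (tau0 n f x))"
    by (rule sum_mono) (use assms in auto)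
  then have "2 ^ n * real D \<le> (\<Sum>x\<in>cube n. real (tau0 n f x))" using card_cube[of n] by simp
  then show ?thesis unfolding expected_tau0_def by (simp add: field_simps)
qed

lemma prob_split: "prob_cube n (\<lambda>x. f x) + prob_cube n (\<lambda>x. \<not> f x) = 1"
proof -
  have "card {x\<in>cube n. f x} + card {x\<in>cube n. \<not> f x} = card (cube n)"
    by (subst card_Un_disjoint[symmetric]) (auto simp: finite_cube intro: arg_cong[where f=card])
  then have "real (card {x\<in>cube n. f x}) + real (card {x\<in>cube n. \<not> f x}) = 2 ^ n"
    using card_cube[of n] by (metis of_nat_add)
  then show ?thesis unfolding prob_cube_def by (simp add: field_simps)
qed

lemma bias_half: "bias n f \<le> 1/2"
  using prob_split[of n f] unfolding bias_def by simp

lemma g_const: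
  assumes "\<forall>k. d \<le> k \<and> k + 1 \<le> n - d \<longrightarrow> gg n f k = gg n f (k+1)"
  shows "d \<le> j \<Longrightarrow> j \<le> n - d \<Longrightarrow> gg n f j = gg n f d"
proof (induction j rule: dec_induct)
  case base then show ?case by simp
next
  case (step j) then show ?case using assms by (metis Suc_eq_plus1 Suc_leD)
qed

lemma ln2_ge: "ln (2::real) \<ge> 1/2"
  using ln_le_minus_one[of "1/2::real"] by (simp add: ln_div)

lemma ln43_ge: "ln (4/3::real) \<ge> 1/4"
  using ln_le_minus_one[of "3/4::real"] ln_div[of 3 4] ln_div[of 4 3] by simp

lemma caseB_bound:
  assumes sym: "symmetric_fun n f"
    and B: "\<forall>k. d \<le> k \<and> k + 1 \<le> n - d \<longrightarrow> gg n f k = gg n f (k+1)"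
  shows "bias n f \<le> 2 ^ (d+1) * (3/4) ^ n"
proof -
  define c0 where "c0 = gg n f d"
  have sub: "{x\<in>cube n. f x \<noteq> c0} \<subseteq> {x\<in>cube n. count_list x True < d} \<union> {x\<in>cube n. count_list x False < d}"
  proof
    fix x assume x: "x \<in> {x\<in>cube n. f x \<noteq> c0}"
    then have xc: "x \<in> cube n" by simp
    have len: "count_list x True + count_list x False = n" using xc count_TF[of x] by (simp add: cube_def)
    show "x \<in> {x\<in>cube n. count_list x True < d} \<union> {x\<in>cube n. count_list x False < d}"
    proof (rule ccontr)
      assume "\<not> ?thesis"
      then have "d \<le> count_list x True" "count_list x True \<le> n - d" using xc len by auto
      then have "gg n f (count_list x True) = c0" unfolding c0_def by (rule g_const[OF B])
      then show False using x sym_g[OF sym xc] by simp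
    qed
  qed
  have "real (card {x\<in>cube n. f x \<noteq> c0}) \<le> real (card ({x\<in>cube n. count_list x True < d} \<union> {x\<in>cube n. count_list x False < d}))"
    using sub by (intro of_nat_mono card_mono) (auto simp: finite_cube)
  also have "\<dots> \<le> real (card {x\<in>cube n. count_list x True < d}) + real (card {x\<in>cube n. count_list x False < d})"
    by (simp only: of_nat_add[symmetric] of_nat_le_iff card_Un_le)
  also have "\<dots> \<le> 2 * (2 ^ d * (3/2) ^ n)" using card_count_lt[of n True d] card_count_lt[of n False d] by linarith
  finally have cb: "real (card {x\<in>cube n. f x \<noteq> c0}) \<le> 2 * (2 ^ d * (3/2) ^ n)" .
  have "bias n f \<le> prob_cube n (\<lambda>x. f x \<noteq> c0)"
    unfolding bias_def by (cases c0) (simp_all add: min_le_iff_disj)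
  also have "\<dots> \<le> 2 * (2 ^ d * (3/2) ^ n) / 2 ^ n"
    unfolding prob_cube_def using cb by (intro divide_right_mono) auto
  also have "\<dots> = 2 ^ (d+1) * (3/4) ^ n"
  proof -
    have h: "(3/4::real) ^ n = (3/2) ^ n / 2 ^ n"
      using power_divide[of "3/2::real" 2 n] by simp
    show ?thesis by (simp add: h)
  qed
  finally show ?thesis .
qed

theorem mainTheorem7:
  shows "\<exists>c>0. \<forall>(\<epsilon>::real) (n::nat) (f::bool list \<Rightarrow> bool).
           \<epsilon> > 0 \<longrightarrow> symmetric_fun n f \<longrightarrow> bias n f \<ge> \<epsilon> \<longrightarrow>
           expected_tau0 n f \<ge> c * real n / ln (1 / \<epsilon>)"
proof (intro exI[of _ "1/40"] conjI allI impI)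
  fix \<epsilon> :: real and n f
  assume ep: "\<epsilon> > 0" and sym: "symmetric_fun n f" and bi: "bias n f \<ge> \<epsilon>"
  have ehalf: "\<epsilon> \<le> 1/2" using bi bias_half[of n f] by simp
  have L1: "ln (1/\<epsilon>) \<ge> ln 2" using ep ehalf by (subst ln_le_cancel_iff) (auto simp: field_simps)
  have L: "ln (1/\<epsilon>) \<ge> 1/2" using L1 ln2_ge by simp
  have p1: "prob_cube n (\<lambda>x. f x) > 0" and p2: "prob_cube n (\<lambda>x. \<not> f x) > 0"
    using bi ep unfolding bias_def by auto
  have "{x\<in>cube n. f x} \<noteq> {}" using p1 unfolding prob_cube_def by (intro notI) simp
  then obtain a where a: "a \<in> cube n" "f a" by blast
  have "{x\<in>cube n. \<not> f x} \<noteq> {}" using p2 unfolding prob_cube_def by (intro notI) simp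
  then obtain b where b: "b \<in> cube n" "\<not> f b" by blast
  have t1: "\<forall>x\<in>cube n. 1 \<le> tau0 n f x"
  proof
    fix x assume x: "x \<in> cube n"
    have "\<not> restriction_constant n f x 0"
      using a b unfolding restriction_constant_def by auto
    then have "0 < tau0 n f x" using tau_ge[OF x, of 0] by auto
    then show "1 \<le> tau0 n f x" by simp
  qed
  have E1: "1 \<le> expected_tau0 n f" using exp_ge[OF t1] by simp
  define d where "d = (n + 9) div 10"
  have dle: "10 * real d \<le> real n + 9" unfolding d_def
  proof -
    have "10 * ((n + 9) div 10) \<le> n + 9" by simp
    then have "real (10 * ((n + 9) div 10)) \<le> real (n + 9)" by (simp only: of_nat_le_iff)
    then show "10 * real ((n + 9) div 10) \<le> real n + 9" by simp
  qed
  have dge: "real n \<le> 10 * real d" unfolding d_def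
  proof -
    have "n \<le> 10 * ((n + 9) div 10)" by simp
    then have "real n \<le> real (10 * ((n + 9) div 10))" by (simp only: of_nat_le_iff)
    then show "real n \<le> 10 * real ((n + 9) div 10)" by simp
  qed
  have Lpos: "ln (1/\<epsilon>) > 0" using L by simp
  show "1/40 * real n / ln (1/\<epsilon>) \<le> expected_tau0 n f"
  proof (cases "\<exists>k. d \<le> k \<and> k + 1 \<le> n - d \<and> gg n f k \<noteq> gg n f (k+1)")
    case True
    then obtain k where k: "d \<le> k" "k + 1 \<le> n - d" "gg n f k \<noteq> gg n f (k+1)" by blast
    have "\<forall>x\<in>cube n. d + 1 \<le> tau0 n f x"
    proof
      fix x assume x: "x \<in> cube n"
      have "\<forall>t\<le>d. \<not> restriction_constant n f x t"
        using rc_fail[OF sym x k(3)] k by auto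
      then have "d < tau0 n f x" by (rule tau_ge[OF x])
      then show "d + 1 \<le> tau0 n f x" by simp
    qed
    then have "real (d+1) \<le> expected_tau0 n f" by (rule exp_ge)
    then have E: "real n / 10 \<le> expected_tau0 n f" using dge by simp
    have "1/40 * real n \<le> expected_tau0 n f * ln (1/\<epsilon>)"
    proof -
      have "1/40 * real n \<le> real n / 10 * (1/2)" by simp
      also have "\<dots> \<le> expected_tau0 n f * ln (1/\<epsilon>)"
        using E L by (intro mult_mono) auto
      finally show ?thesis .
    qed
    then show ?thesis using Lpos by (simp add: divide_le_eq)
  next
    case False
    then have B: "\<forall>k. d \<le> k \<and> k + 1 \<le> n - d \<longrightarrow> gg n f k = gg n f (k+1)" by blast
    have eb: "\<epsilon> \<le> 2 ^ (d+1) * (3/4) ^ n" using caseB_bound[OF sym B] bi by simp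
    have "1 / (2 ^ (d+1) * (3/4) ^ n) \<le> 1/\<epsilon>"
      using eb ep by (intro divide_left_mono) auto
    moreover have "1 / (2 ^ (d+1) * (3/4) ^ n) = (4/3::real) ^ n / 2 ^ (d+1)"
      by (simp add: power_divide)
    ultimately have "(4/3) ^ n / 2 ^ (d+1) \<le> 1/\<epsilon>" by simp
    then have "ln ((4/3) ^ n / 2 ^ (d+1)) \<le> ln (1/\<epsilon>)"
      using ep by (subst ln_le_cancel_iff) auto
    moreover have "ln ((4/3::real) ^ n / 2 ^ (d+1)) = real n * ln (4/3) - real (d+1) * ln 2"
      using ln_realpow[of 2 "d+1"] by (simp add: ln_div ln_realpow del: power_Suc)
    ultimately have "real n * ln (4/3) - real (d+1) * ln 2 \<le> ln (1/\<epsilon>)" by simp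
    moreover have "real n / 4 \<le> real n * ln (4/3)" using mult_left_mono[OF ln43_ge, of "real n"] by simp
    moreover have "real (d+1) * ln 2 \<le> real (d+1)" using mult_left_mono[OF less_imp_le[OF ln_2_less_1], of "real (d+1)"] by simp
    ultimately have L2: "real n / 4 - real (d+1) \<le> ln (1/\<epsilon>)" by linarith
    have "1/40 * real n \<le> ln (1/\<epsilon>)"
    proof (cases "n \<le> 20")
      case True then show ?thesis using L by simp
    next
      case False then show ?thesis using L2 dle by simp
    qed
    also have "\<dots> \<le> expected_tau0 n f * ln (1/\<epsilon>)" using E1 Lpos by simp
    finally show ?thesis using Lpos by (simp add: divide_le_eq)
  qed
qed simp

end
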